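(* Suppose $\{0,1\}\subseteq\Sigma$ and $m\ge2$. Let $\pi=x_0^{n_0}x_1^{n_1}\cdots x_k^{n_k}$ with distinct variables $x_0,\dots,x_k$ and $n_0,\dots,n_k\in\{2,\dots,m\}$. Suppose that for some positive integers $\ell,i_1,\dots,i_\ell$, $w:=(01)^{i_1}(0^21)^{i_2}\cdots(0^\ell1)^{i_\ell}\in L(\pi)$. For $j\in\{1,\dots,\ell\}$ let $I_j$ be the interval of positions of $w$ occupied by the factor $(0^j1)^{i_j}$ in this factorisation, and for $j\in\{0,\dots,k\}$ let $J_j$ be the interval of positions of $\pi$ occupied by $x_j^{n_j}$. Let $h$ be any substitution with $h(\pi)=w$ and $h(x_i)\neq\varepsilon$ for all $i\in\{0,\dots,k\}$. Then: (i) for every $j\in\{0,\dots,k\}$, $h(x_j)=(0^{j'}1)^{i'}$ for some $j'\in\{1,\dots,\ell\}$ and $i'\in\{1,\dots,i_{j'}\}$; (ii) for every $j\in\{1,\dots,\ell\}$ there are $g_j\in\{0,\dots,k\}$ and $h_j\in\{0,\dots,k-g_j\}$ such that $I_j$ is the disjoint union $\bigcup_{l=0}^{h_j}\mathcal I_{h,\pi}(J_{g_j+l})$.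
   Context: Fix a countably infinite set $X$ of variables and an alphabet $\Sigma$ disjoint from $X$. A pattern is a nonempty finite string over $X\cup\Sigma$. A substitution is a morphism $h:(X\cup\Sigma)^*\to\Sigma^*$ fixing letters; $L(\pi)$ (erasing pattern language) is the set of all $h(\pi)$. For a substitution $h$ and a pattern $\pi$, $\mathcal I_{h,\pi}$ maps a closed interval $[p,q]$ of positions of $\pi$ to the closed interval of positions of $h(\pi)$ occupied by the factor $h(\pi[p]\cdots\pi[q])$ in $h(\pi)=h(\pi[1])\cdots h(\pi[|\pi|])$. *)

theory Defs
  imports Main
begin

datatype ('x, 'a) sym = Var 'x | Ter 'a

definition subst_sym :: "('x \<Rightarrow> 'a list) \<Rightarrow> ('x, 'a) sym \<Rightarrow> 'a list" where
  "subst_sym h s = (case s of Var x \<Rightarrow> h x | Ter a \<Rightarrow> [a])"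

definition subst :: "('x \<Rightarrow> 'a list) \<Rightarrow> ('x, 'a) sym list \<Rightarrow> 'a list" where
  "subst h \<pi> = concat (map (subst_sym h) \<pi>)"

definition lang :: "('x, 'a) sym list \<Rightarrow> 'a list set" where
  "lang \<pi> = {subst h \<pi> | h. True}"

text \<open>The map I_{h,pi} on closed intervals [p,q] of (1-based) positions of pi:
  the interval of positions of h(pi) occupied by h(pi[p]...pi[q]).\<close>
definition Imap :: "('x \<Rightarrow> 'a list) \<Rightarrow> ('x, 'a) sym list \<Rightarrow> nat \<Rightarrow> nat \<Rightarrow> nat set" where
  "Imap h \<pi> p q = {length (subst h (take (p - 1) \<pi>)) + 1 .. length (subst h (take q \<pi>))}"

definition blk :: "'a \<Rightarrow> 'a \<Rightarrow> nat \<Rightarrow> nat \<Rightarrow> 'a list" where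
  "blk c0 c1 j i = concat (replicate i (replicate j c0 @ [c1]))"

definition powpat :: "(nat \<Rightarrow> 'x) \<Rightarrow> (nat \<Rightarrow> nat) \<Rightarrow> nat \<Rightarrow> ('x, 'a) sym list" where
  "powpat x n k = concat (map (\<lambda>j. replicate (n j) (Var (x j))) [0..<Suc k])"

definition wword :: "'a \<Rightarrow> 'a \<Rightarrow> (nat \<Rightarrow> nat) \<Rightarrow> nat \<Rightarrow> 'a list" where
  "wword c0 c1 i l = concat (map (\<lambda>j. blk c0 c1 j (i j)) [1..<Suc l])"

text \<open>I_j: positions (1-based) of w occupied by the factor (0^j 1)^{i_j}.\<close>
definition Iw :: "(nat \<Rightarrow> nat) \<Rightarrow> nat \<Rightarrow> nat set" where
  "Iw i j = {(\<Sum>t\<in>{1..<j}. (t + 1) * i t) + 1 .. (\<Sum>t\<in>{1..j}. (t + 1) * i t)}"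

text \<open>J_j: positions (1-based) of pi occupied by x_j^{n_j}, as start and end.\<close>
definition Jstart :: "(nat \<Rightarrow> nat) \<Rightarrow> nat \<Rightarrow> nat" where
  "Jstart n j = (\<Sum>t<j. n t) + 1"

definition Jend :: "(nat \<Rightarrow> nat) \<Rightarrow> nat \<Rightarrow> nat" where
  "Jend n j = (\<Sum>t\<le>j. n t)"

end

theory Submission
  imports Defs
begin



definition enc :: "'a \<Rightarrow> 'a \<Rightarrow> nat list \<Rightarrow> 'a list" where
  "enc c0 c1 as = concat (map (\<lambda>a. replicate a c0 @ [c1]) as)"

lemma enc_Nil[simp]: "enc c0 c1 [] = []" by (simp add: enc_def)
lemma enc_Cons[simp]: "enc c0 c1 (a#as) = replicate a c0 @ c1 # enc c0 c1 as" by (simp add: enc_def)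
lemma enc_append[simp]: "enc c0 c1 (as @ bs) = enc c0 c1 as @ enc c0 c1 bs" by (simp add: enc_def)
lemma enc_concat: "enc c0 c1 (concat xss) = concat (map (enc c0 c1) xss)"
  by (induct xss) auto
lemma enc_ne: "as \<noteq> [] \<Longrightarrow> enc c0 c1 as \<noteq> []" by (cases as) auto
lemma enc_eq_Nil[simp]: "(enc c0 c1 as = []) = (as = [])" by (cases as) auto

lemma enc_last: "as \<noteq> [] \<Longrightarrow> last (enc c0 c1 as) = c1"
proof (induct as)
  case (Cons a as) then show ?case by (cases as) auto
qed simp

lemma rep_c1_eq:
  assumes "c0 \<noteq> c1" "replicate a c0 @ c1 # X = replicate b c0 @ c1 # Y"
  shows "a = b \<and> X = Y"
  using assms(2)
proof (induct a arbitrary: b)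
  case 0 then show ?case using assms(1) by (cases b) auto
next
  case (Suc a) then show ?case using assms(1) by (cases b) auto
qed

lemma enc_inj:
  assumes "c0 \<noteq> c1" shows "enc c0 c1 as = enc c0 c1 bs \<Longrightarrow> as = bs"
proof (induct as arbitrary: bs)
  case Nil then show ?case by (cases bs) auto
next
  case (Cons a as)
  show ?case
  proof (cases bs)
    case Nil then show ?thesis using Cons.prems by simp
  next
    case (Cons b bs')
    have "replicate a c0 @ c1 # enc c0 c1 as = replicate b c0 @ c1 # enc c0 c1 bs'"
      using Cons Cons.prems by simp
    then have "a = b \<and> enc c0 c1 as = enc c0 c1 bs'" by (rule rep_c1_eq[OF assms])
    then show ?thesis using Cons.hyps Cons by simp
  qed
qed

lemma prefix_rep_last:
  assumes "X @ us = replicate a c0 @ [c1]" "us \<noteq> []" "X \<noteq> []"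
  shows "last X = c0"
proof -
  have "last us = c1" using assms(1,2) by (metis last_appendR last_snoc)
  then have "X @ butlast us = replicate a c0" using assms(1,2)
    by (metis append_butlast_last_id append_assoc append1_eq_conv)
  then have "set X \<subseteq> set (replicate a c0)" by (metis Un_upper1 set_append)
  then have "set X \<subseteq> {c0}" by (auto split: if_splits)
  then show ?thesis using assms(3) last_in_set by blast
qed

lemma enc_split:
  assumes "c0 \<noteq> c1"
  shows "enc c0 c1 bs = X @ Y \<Longrightarrow> (X = [] \<or> last X = c1) \<Longrightarrow>
     \<exists>b1 b2. bs = b1 @ b2 \<and> enc c0 c1 b1 = X \<and> enc c0 c1 b2 = Y"
proof (induct bs arbitrary: X)
  case Nil then show ?case by auto
next
  case (Cons a bs)
  show ?case
  proof (cases "X = []")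
    case True then show ?thesis using Cons.prems by (intro exI[of _ "[]"] exI[of _ "a#bs"]) auto
  next
    case False
    have "(replicate a c0 @ [c1]) @ enc c0 c1 bs = X @ Y" using Cons.prems by simp
    then have "\<exists>us. (replicate a c0 @ [c1] = X @ us \<and> us @ enc c0 c1 bs = Y) \<or>
       ((replicate a c0 @ [c1]) @ us = X \<and> enc c0 c1 bs = us @ Y)"
      by (simp only: append_eq_append_conv2)
    then obtain us where us: "(replicate a c0 @ [c1] = X @ us \<and> us @ enc c0 c1 bs = Y) \<or>
       ((replicate a c0 @ [c1]) @ us = X \<and> enc c0 c1 bs = us @ Y)" by blast
    then show ?thesis
    proof
      assume A: "replicate a c0 @ [c1] = X @ us \<and> us @ enc c0 c1 bs = Y"
      show ?thesis
      proof (cases "us = []")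
        case True then show ?thesis using A by (intro exI[of _ "[a]"] exI[of _ bs]) auto
      next
        case F2: False
        then have "last X = c0" using prefix_rep_last A False by metis
        then show ?thesis using Cons.prems(2) False assms by auto
      qed
    next
      assume A: "(replicate a c0 @ [c1]) @ us = X \<and> enc c0 c1 bs = us @ Y"
      have "us \<noteq> [] \<Longrightarrow> last us = last X" using A by (metis last_appendR)
      then have "us = [] \<or> last us = c1" using Cons.prems(2) False by auto
      then obtain b1 b2 where "bs = b1 @ b2" "enc c0 c1 b1 = us" "enc c0 c1 b2 = Y"
        using Cons.hyps A by blast
      then show ?thesis using A by (intro exI[of _ "a # b1"] exI[of _ b2]) auto
    qed
  qed
qed

lemma enc_suffix_rep:
  assumes "c0 \<noteq> c1" "enc c0 c1 X @ replicate a c0 = v @ replicate c c0" "a \<le> c"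
  shows "a = c \<and> v = enc c0 c1 X"
proof (cases "a = c")
  case True then show ?thesis using assms by simp
next
  case False
  then have "replicate c c0 = replicate (c - a) c0 @ replicate a c0"
    using assms(3) by (metis le_add_diff_inverse2 replicate_add)
  then have E: "enc c0 c1 X = v @ replicate (c - a) c0" using assms(2) by simp
  have "c - a > 0" using False assms(3) by simp
  then have "last (enc c0 c1 X) = c0" using E by (simp add: last_append)
  moreover have "enc c0 c1 X \<noteq> []" using E \<open>c - a > 0\<close> by simp
  ultimately show ?thesis using enc_last assms(1) by (metis enc_eq_Nil)
qed

lemma sorted_dup_const:
  assumes "sorted (cs @ cs)" "cs \<noteq> []"
  shows "cs = replicate (length cs) (hd cs)"
proof -
  have "\<forall>x\<in>set cs. \<forall>y\<in>set cs. x \<le> y" using assms(1) by (simp add: sorted_append)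
  then have "\<forall>y\<in>set cs. y = hd cs" using assms(2) by (metis hd_in_set order_antisym)
  then show ?thesis by (metis replicate_length_same)
qed

lemma concat_rep_rep: "concat (replicate n (replicate L j)) = replicate (n * L) j"
  by (induct n) (auto simp: replicate_add)

lemma enc_rep_pow: "enc c0 c1 (concat (replicate n cs)) = concat (replicate n (enc c0 c1 cs))"
  by (induct n) auto



lemma concat_rep_snoc: "concat (replicate (Suc m) u) = concat (replicate m u) @ u"
  by (induct m) auto

lemma key:
  assumes c: "c0 \<noteq> c1" and s: "sorted bs" and e: "enc c0 c1 bs = v @ concat (replicate n u)"
    and n: "n \<ge> 2" and u: "u \<noteq> []"
  shows "\<exists>as1 j L. bs = as1 @ replicate (n*L) j \<and> u = enc c0 c1 (replicate L j) \<and> L \<ge> 1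
     \<and> v = enc c0 c1 as1"
proof -
  obtain n' where n': "n = Suc (Suc n')" using n by (metis add_2_eq_Suc le_Suc_ex)
  have bsne: "bs \<noteq> []" using e u n' by auto
  have "last (enc c0 c1 bs) = c1" using enc_last bsne by metis
  then have lu: "last u = c1" using e n' u by (simp add: concat_rep_snoc del: replicate.simps)
  have e1: "enc c0 c1 bs = (v @ concat (replicate (Suc n') u)) @ u"
    using e n' by (simp add: concat_rep_snoc del: replicate.simps)
  have "last (v @ concat (replicate (Suc n') u)) = c1" using lu u
    by (simp add: concat_rep_snoc del: replicate.simps)
  then obtain b1 cs where "bs = b1 @ cs" and ucs: "enc c0 c1 cs = u"
    using enc_split[OF c e1] by blast
  have csne: "cs \<noteq> []" using ucs u by auto
  have e2: "enc c0 c1 bs = (v @ u) @ concat (replicate (Suc n') u)" using e n' by simp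
  have "last (v @ u) = c1" using lu u by simp
  then obtain b0 b2 where bs: "bs = b0 @ b2" and b0: "enc c0 c1 b0 = v @ u"
    and b2: "enc c0 c1 b2 = concat (replicate (Suc n') u)"
    using enc_split[OF c e2] by blast
  have "enc c0 c1 b2 = enc c0 c1 (concat (replicate (Suc n') cs))"
    using b2 ucs enc_rep_pow by metis
  then have b2': "b2 = concat (replicate (Suc n') cs)" using enc_inj[OF c] by blast
  obtain c cs' where cs: "cs = c # cs'" using csne by (cases cs) auto
  have "enc c0 c1 b0 = (v @ replicate c c0 @ [c1]) @ enc c0 c1 cs'"
    using b0 ucs cs by simp
  moreover have "last (v @ replicate c c0 @ [c1]) = c1" by simp
  ultimately obtain b0a b0b where b0s: "b0 = b0a @ b0b" and b0a: "enc c0 c1 b0a = v @ replicate c c0 @ [c1]"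
    and b0b: "enc c0 c1 b0b = enc c0 c1 cs'"
    using enc_split[OF c] by blast
  have b0b': "b0b = cs'" using b0b enc_inj[OF c] by blast
  have "b0a \<noteq> []" using b0a by auto
  then obtain b0c a where b0c: "b0a = b0c @ [a]" by (metis rev_exhaust)
  have "enc c0 c1 b0c @ replicate a c0 @ [c1] = v @ replicate c c0 @ [c1]"
    using b0a b0c by simp
  then have E: "enc c0 c1 b0c @ replicate a c0 = v @ replicate c c0" by simp
  have "sorted (b0 @ cs)" using s bs b2' by (simp add: sorted_append)
  then have "a \<le> c" using b0s b0c b0b' cs by (simp add: sorted_append)
  then have ac: "a = c \<and> v = enc c0 c1 b0c" using enc_suffix_rep[OF c E] by blast
  have b0eq: "b0 = b0c @ cs" using b0s b0c b0b' cs ac by simp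
  have bs2: "bs = b0c @ concat (replicate n cs)" using bs b0eq b2' n' by simp
  have "sorted (cs @ cs @ concat (replicate n' cs))" using s bs2 n' by (simp add: sorted_append)
  then have "sorted (cs @ cs)" by (simp add: sorted_append)
  then have csr: "cs = replicate (length cs) (hd cs)" using sorted_dup_const csne by blast
  show ?thesis
  proof (intro exI conjI)
    show "bs = b0c @ replicate (n * length cs) (hd cs)"
      using bs2 csr concat_rep_rep by metis
    show "u = enc c0 c1 (replicate (length cs) (hd cs))" using ucs csr by simp
    show "1 \<le> length cs" using csne by (cases cs) auto
    show "v = enc c0 c1 b0c" using ac by simp
  qed
qed



lemma sorted_take': "sorted xs \<Longrightarrow> sorted (take r xs)"
  by (metis append_take_drop_id sorted_append)

lemma subst_append: "subst h (a @ b) = subst h a @ subst h b"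
  by (simp add: subst_def)
lemma subst_concat: "subst h (concat xss) = concat (map (subst h) xss)"
  by (induct xss) (auto simp: subst_append, simp add: subst_def)
lemma subst_rep: "subst h (replicate c (Var y)) = concat (replicate c (h y))"
  by (induct c) (auto simp: subst_def subst_sym_def)
lemma blk_enc: "blk c0 c1 j c = enc c0 c1 (replicate c j)"
  by (simp add: blk_def enc_def map_replicate)
lemma len_enc_rep: "length (enc c0 c1 (replicate c t)) = c * Suc t"
  by (induct c) auto

lemma sorted_blocks: "sorted (concat (map (\<lambda>t. replicate (f t) (t::nat)) [a..<b]))"
proof (induct b)
  case (Suc b) then show ?case
    by (cases "a \<le> b") (auto simp: sorted_append)
qed simp

lemma take_concat_upt:
  "t \<le> K \<Longrightarrow> take (length (concat (map G [0..<t]))) (concat (map G [0..<K])) = concat (map G [0..<t])"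
  using upt_add_eq_append[of 0 t "K - t"] by simp

lemma len_concat_rep_var: "length (concat (map (\<lambda>s. replicate (n s) (V s)) [0..<t])) = (\<Sum>s<t. n s)"
  by (induct t) auto

lemma len_blocks: "length (concat (map (\<lambda>t. replicate (f t) (t::nat)) [a..<b])) = (\<Sum>t\<in>{a..<b}. f t)"
  by (simp add: length_concat interv_sum_list_conv_sum_set_nat o_def)

lemma len_enc_blocks: "length (enc c0 c1 (concat (map (\<lambda>t. replicate (f t) (t::nat)) [a..<b])))
   = (\<Sum>t\<in>{a..<b}. (t + 1) * f t)"
  by (simp add: enc_concat length_concat interv_sum_list_conv_sum_set_nat o_def len_enc_rep algebra_simps)

lemma cnt_blocks: "length (filter (\<lambda>y. y = j) (concat (map (\<lambda>t. replicate (i t) t) [1..<Suc l])))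
   = (if 1 \<le> j \<and> j \<le> l then i j else 0)"
  by (induct l) (auto simp: filter_concat filter_replicate)

lemma bnd:
  "(\<forall>t<K. \<exists>c j. take (R (Suc t)) as = take (R t) as @ replicate c j) \<Longrightarrow> (\<forall>t\<le>K. R t \<le> length as)
   \<Longrightarrow> R 0 = 0 \<Longrightarrow> 0 < s \<Longrightarrow> s \<le> R K \<Longrightarrow> s < length as \<Longrightarrow> as!(s-1) \<noteq> as!s \<Longrightarrow> \<exists>g\<le>K. R g = s"
proof (induct K)
  case 0 then show ?case by simp
next
  case (Suc K)
  show ?case
  proof (cases "s \<le> R K")
    case True then show ?thesis using Suc by (metis le_SucI less_SucI)
  next
    case False
    show ?thesis
    proof (cases "s = R (Suc K)")
      case True then show ?thesis by blast
    next
      case F2: False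
      then have sl: "s < R (Suc K)" using Suc.prems by simp
      obtain c j where cj: "take (R (Suc K)) as = take (R K) as @ replicate c j" using Suc.prems(1) by blast
      have l1: "R (Suc K) \<le> length as" "R K \<le> length as" using Suc.prems(2) by auto
      have "length (take (R (Suc K)) as) = R K + c" using cj l1 by simp
      then have RS: "R (Suc K) = R K + c" using l1 by simp
      have "as ! s = take (R (Suc K)) as ! s" using sl by simp
      also have "\<dots> = j" using cj False sl RS l1 by (simp add: nth_append)
      finally have A: "as ! s = j" .
      have "R K \<le> s - 1" using False by simp
      have "as ! (s - 1) = take (R (Suc K)) as ! (s - 1)" using sl by simp
      also have "\<dots> = j" using cj False sl RS l1 \<open>R K \<le> s - 1\<close> by (simp add: nth_append)
      finally show ?thesis using A Suc.prems by simp
    qed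
  qed
qed

lemma union_ivl:
  assumes "\<And>a b. a \<le> b \<Longrightarrow> p a \<le> (p b :: nat)"
  shows "(\<Union>t\<in>{0..d}. {p (g + t) + 1 .. p (Suc (g + t))}) = {p g + 1 .. p (Suc (g + d))}"
proof (induct d)
  case 0 then show ?case by simp
next
  case (Suc d)
  have "{0..Suc d} = insert (Suc d) {0..d}" by auto
  then have "(\<Union>t\<in>{0..Suc d}. {p (g + t) + 1 .. p (Suc (g + t))})
     = {p g + 1 .. p (Suc (g + d))} \<union> {p (Suc (g + d)) + 1 .. p (Suc (Suc (g + d)))}"
    using Suc by auto
  also have "\<dots> = {p g + 1 .. p (Suc (Suc (g + d)))}"
    using assms[of g "Suc (g + d)"] assms[of "Suc (g+d)" "Suc (Suc (g + d))"] by auto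
  finally show ?case by simp
qed



theorem mainTheorem11:
  fixes c0 c1 :: 'a
    and m k l :: nat
    and x :: "nat \<Rightarrow> nat"
    and n i :: "nat \<Rightarrow> nat"
    and h :: "nat \<Rightarrow> 'a list"
  assumes "c0 \<noteq> c1"
    and "m \<ge> 2"
    and "inj_on x {0..k}"
    and "\<forall>j\<in>{0..k}. n j \<in> {2..m}"
    and "l \<ge> 1"
    and "\<forall>j\<in>{1..l}. i j \<ge> 1"
    and "wword c0 c1 i l \<in> lang (powpat x n k)"
    and "subst h (powpat x n k) = wword c0 c1 i l"
    and "\<forall>j\<in>{0..k}. h (x j) \<noteq> []"
  shows "(\<forall>j\<in>{0..k}. \<exists>j'\<in>{1..l}. \<exists>i'\<in>{1..i j'}. h (x j) = blk c0 c1 j' i')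
       \<and> (\<forall>j\<in>{1..l}. \<exists>g\<in>{0..k}. \<exists>hj\<in>{0..k - g}.
            Iw i j = (\<Union>t\<in>{0..hj}. Imap h (powpat x n k) (Jstart n (g + t)) (Jend n (g + t)))
          \<and> (\<forall>t1\<in>{0..hj}. \<forall>t2\<in>{0..hj}. t1 \<noteq> t2 \<longrightarrow>
               Imap h (powpat x n k) (Jstart n (g + t1)) (Jend n (g + t1))
             \<inter> Imap h (powpat x n k) (Jstart n (g + t2)) (Jend n (g + t2)) = {}))"
proof -
  note c = assms(1)
  define as where "as = concat (map (\<lambda>t. replicate (i t) t) [1..<Suc l])"
  define F where "F = (\<lambda>t. concat (replicate (n t) (h (x t))))"
  define pre where "pre t = concat (map F [0..<t])" for t
  define G where "G = (\<lambda>s. replicate (n s) (Var (x s) :: (nat, 'a) sym))"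
  have pp: "powpat x n k = concat (map G [0..<Suc k])" by (simp add: powpat_def G_def)
  have wenc: "wword c0 c1 i l = enc c0 c1 as"
    unfolding wword_def as_def by (simp add: enc_concat blk_enc o_def)
  have sas: "sorted as" unfolding as_def by (rule sorted_blocks)
  have substG: "subst h (concat (map G [0..<t])) = pre t" for t
    by (simp add: subst_concat pre_def G_def F_def subst_rep o_def)
  have pre_take: "subst h (take (\<Sum>s<t. n s) (powpat x n k)) = pre t" if "t \<le> Suc k" for t
  proof -
    have "length (concat (map G [0..<t])) = (\<Sum>s<t. n s)"
      unfolding G_def by (rule len_concat_rep_var)
    then show ?thesis using take_concat_upt[OF that, of G] pp substG by metis
  qed
  have preK: "pre (Suc k) = enc c0 c1 as" using substG[of "Suc k"] pp assms(8) wenc by simp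
  have preS: "pre (Suc t) = pre t @ F t" for t by (simp add: pre_def)
  have nt: "t \<le> k \<Longrightarrow> n t \<ge> 2" for t using assms(4) by auto
  have ht: "t \<le> k \<Longrightarrow> h (x t) \<noteq> []" for t using assms(9) by auto
  have ex: "d \<le> Suc k \<longrightarrow> (\<exists>r\<le>length as. pre (Suc k - d) = enc c0 c1 (take r as))" for d
  proof (induct d)
    case 0 then show ?case using preK by (intro impI exI[of _ "length as"]) auto
  next
    case (Suc d)
    show ?case
    proof
      assume d: "Suc d \<le> Suc k"
      then obtain r where r: "r \<le> length as" "pre (Suc k - d) = enc c0 c1 (take r as)"
        using Suc by auto
      define t where "t = k - d"
      have tS: "Suc k - d = Suc t" "Suc k - Suc d = t" "t \<le> k" using d t_def by auto
      have "enc c0 c1 (take r as) = pre t @ concat (replicate (n t) (h (x t)))"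
        using r tS preS F_def by simp
      then obtain as1 j L where A: "take r as = as1 @ replicate (n t * L) j" "pre t = enc c0 c1 as1"
        using key[OF c sorted_take'[OF sas]] nt[OF tS(3)] ht[OF tS(3)] by metis
      have "take (length as1) (take r as) = as1" using A by simp
      moreover have "length as1 \<le> r" using A(1) by (metis le_add1 length_append length_take min.bounded_iff)
      ultimately have "as1 = take (length as1) as" by (simp add: min_absorb1)
      moreover have "length as1 \<le> length as" using \<open>length as1 \<le> r\<close> r by simp
      ultimately show "\<exists>r\<le>length as. pre (Suc k - Suc d) = enc c0 c1 (take r as)"
        using A tS by metis
    qed
  qed
  define R where "R t = (SOME r. r \<le> length as \<and> pre t = enc c0 c1 (take r as))" for t
  have R: "R t \<le> length as \<and> pre t = enc c0 c1 (take (R t) as)" if "t \<le> Suc k" for t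
  proof -
    have "\<exists>r. r \<le> length as \<and> pre t = enc c0 c1 (take r as)"
      using ex[of "Suc k - t"] that by (simp add: Suc_diff_le) 
    then show ?thesis unfolding R_def by (rule someI_ex)
  qed
  have step: "\<exists>j L. take (R (Suc t)) as = take (R t) as @ replicate (n t * L) j
      \<and> h (x t) = enc c0 c1 (replicate L j) \<and> L \<ge> 1" if tk: "t \<le> k" for t
  proof -
    have "enc c0 c1 (take (R (Suc t)) as) = pre t @ concat (replicate (n t) (h (x t)))"
      using R[of "Suc t"] tk preS F_def by simp
    then obtain as1 j L where A: "take (R (Suc t)) as = as1 @ replicate (n t * L) j"
      "h (x t) = enc c0 c1 (replicate L j)" "L \<ge> 1" "pre t = enc c0 c1 as1"
      using key[OF c sorted_take'[OF sas]] nt[OF tk] ht[OF tk] by metis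
    have "as1 = take (R t) as" using A(4) R[of t] tk enc_inj[OF c] by auto
    then show ?thesis using A by blast
  qed
  have R0: "R 0 = 0"
  proof -
    have "enc c0 c1 (take (R 0) as) = []" using R[of 0] by (simp add: pre_def)
    then have "take (R 0) as = []" by simp
    then show ?thesis using R[of 0] by auto
  qed
  have RK: "R (Suc k) = length as"
  proof -
    have "enc c0 c1 (take (R (Suc k)) as) = enc c0 c1 as" using R[of "Suc k"] preK by simp
    then have "take (R (Suc k)) as = as" using enc_inj[OF c] by blast
    then have "length (take (R (Suc k)) as) = length as" by simp
    then show ?thesis using R[of "Suc k"] by simp
  qed
  have cnt: "length (filter (\<lambda>y. y = j) as) = i j" if "j \<in> {1..l}" for j
    using cnt_blocks[of j i l] that unfolding as_def by auto
  have setas: "set as \<subseteq> {1..l}" unfolding as_def by auto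
  have part1: "\<forall>j\<in>{0..k}. \<exists>j'\<in>{1..l}. \<exists>i'\<in>{1..i j'}. h (x j) = blk c0 c1 j' i'"
  proof
    fix t assume "t \<in> {0..k}" then have tk: "t \<le> k" by simp
    obtain j L where A: "take (R (Suc t)) as = take (R t) as @ replicate (n t * L) j"
      "h (x t) = enc c0 c1 (replicate L j)" "L \<ge> 1" using step[OF tk] by blast
    have pos: "0 < n t * L" using nt[OF tk] A(3) by simp
    have "j \<in> set (take (R (Suc t)) as)" using A(1) pos by simp
    then have "j \<in> set as" by (meson in_set_takeD)
    then have jl: "j \<in> {1..l}" using setas by blast
    have "n t * L \<le> length (filter (\<lambda>y. y = j) (take (R (Suc t)) as))"
      using A(1) by (simp add: filter_replicate)
    also have "\<dots> \<le> length (filter (\<lambda>y. y = j) as)"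
      by (metis append_take_drop_id filter_append length_append le_add1)
    also have "\<dots> = i j" using cnt jl by blast
    finally have "n t * L \<le> i j" .
    moreover have "L \<le> n t * L" using nt[OF tk] by simp
    ultimately have "L \<le> i j" by linarith
    then have "L \<in> {1..i j}" using A(3) by simp
    then show "\<exists>j'\<in>{1..l}. \<exists>i'\<in>{1..i j'}. h (x t) = blk c0 c1 j' i'"
      using jl A(2) blk_enc by metis
  qed
  define S where "S = (\<lambda>j. \<Sum>t\<in>{1..<j}. i t)"
  have lenS: "length (concat (map (\<lambda>t. replicate (i t) t) [1..<j])) = S j" for j
    using len_blocks[of i 1 j] unfolding S_def by simp
  have splitas: "as = concat (map (\<lambda>t. replicate (i t) t) [1..<j]) @ concat (map (\<lambda>t. replicate (i t) t) [j..<Suc l])"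
    if "1 \<le> j" "j \<le> Suc l" for j
    using upt_add_eq_append[of 1 j "Suc l - j"] that by (simp add: as_def)
  have takeS: "take (S j) as = concat (map (\<lambda>t. replicate (i t) t) [1..<j])"
    if "1 \<le> j" "j \<le> Suc l" for j
    using splitas[OF that] lenS[of j] by (metis append_eq_conv_conj)
  have Qeq: "length (enc c0 c1 (take (S j) as)) = (\<Sum>t\<in>{1..<j}. (t+1) * i t)"
    if "1 \<le> j" "j \<le> Suc l" for j
    using takeS[OF that] len_enc_blocks[of c0 c1 i 1 j] by simp
  have Slen: "S (Suc l) = length as" using lenS[of "Suc l"] unfolding as_def by simp
  have stepR: "\<forall>t<Suc k. \<exists>c j. take (R (Suc t)) as = take (R t) as @ replicate c j"
    using step by (meson less_Suc_eq_le)
  have Rle: "\<forall>t\<le>Suc k. R t \<le> length as" using R by blast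
  have Rbnd: "\<exists>g\<le>Suc k. R g = S j" if j1: "1 \<le> j" and j2: "j \<le> Suc l" for j
  proof (cases "j = 1")
    case True then show ?thesis using R0 by (intro exI[of _ 0]) (simp add: S_def)
  next
    case F1: False
    show ?thesis
    proof (cases "j = Suc l")
      case True then show ?thesis using RK Slen by (intro exI[of _ "Suc k"]) simp
    next
      case False
      then have jl: "j \<le> l" using j2 by simp
      obtain j1 where j1d: "j = Suc j1" "1 \<le> j1" using j1 F1 by (cases j) auto
      define A' where "A' = concat (map (\<lambda>t. replicate (i t) t) [1..<j1])"
      define B' where "B' = concat (map (\<lambda>t. replicate (i t) t) [Suc j..<Suc l])"
      have Aeq: "concat (map (\<lambda>t. replicate (i t) t) [1..<j]) = A' @ replicate (i j1) j1"
        using j1d upt_Suc_append[of 1 j1] by (simp add: A'_def)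
      have Beq: "concat (map (\<lambda>t. replicate (i t) t) [j..<Suc l]) = replicate (i j) j @ B'"
        using jl upt_conv_Cons[of j "Suc l"] by (simp add: B'_def)
      have ij: "i j \<ge> 1" "i j1 \<ge> 1" using assms(6) jl j1d by auto
      have asq: "as = (A' @ replicate (i j1) j1) @ (replicate (i j) j @ B')"
        using splitas[OF j1 j2] Aeq Beq by simp
      have SA: "S j = length A' + i j1" using lenS[of j] Aeq by simp
      have n1: "as ! S j = j" using asq SA ij by (simp add: nth_append)
      have e2: "S j - 1 = length A' + (i j1 - 1)" using SA ij by simp
      have "as ! (S j - 1) = (replicate (i j1) j1 @ replicate (i j) j @ B') ! (i j1 - 1)"
        unfolding e2 asq append_assoc by (rule nth_append_length_plus)
      also have "\<dots> = j1" using ij by (simp add: nth_append)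
      finally have n2: "as ! (S j - 1) = j1" .
      have "0 < S j" using SA ij by simp
      moreover have "S j < length as" using asq SA ij by simp
      moreover have "as ! (S j - 1) \<noteq> as ! S j" using n1 n2 j1d by simp
      ultimately show ?thesis using bnd[OF stepR Rle R0] RK by simp
    qed
  qed
  define p where "p = (\<lambda>t. length (subst h (take (\<Sum>s<t. n s) (powpat x n k))))"
  have Imap_eq: "Imap h (powpat x n k) (Jstart n t) (Jend n t) = {p t + 1 .. p (Suc t)}" for t
    unfolding Imap_def Jstart_def Jend_def p_def by (simp only: lessThan_Suc_atMost diff_add_inverse2)
  have p_pre: "p t = length (pre t)" if "t \<le> Suc k" for t
    using pre_take[OF that] p_def by simp
  have pmono: "p a \<le> p b" if ab: "a \<le> b" for a b
  proof -
    have al: "(\<Sum>s<a. n s) \<le> (\<Sum>s<b. n s)" using ab by (simp add: sum_mono2)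
    define \<pi> where "\<pi> = (powpat x n k :: (nat, 'a) sym list)"
    have "take (\<Sum>s<b. n s) \<pi> = take (\<Sum>s<a. n s) \<pi> @ drop (\<Sum>s<a. n s) (take (\<Sum>s<b. n s) \<pi>)"
      using append_take_drop_id[of "\<Sum>s<a. n s" "take (\<Sum>s<b. n s) \<pi>"] al by (simp add: min_absorb1)
    then have "subst h (take (\<Sum>s<b. n s) \<pi>) = subst h (take (\<Sum>s<a. n s) \<pi>) @ subst h (drop (\<Sum>s<a. n s) (take (\<Sum>s<b. n s) \<pi>))"
      by (metis subst_append)
    then show ?thesis unfolding p_def \<pi>_def[symmetric] by simp
  qed
  have part2: "\<forall>j\<in>{1..l}. \<exists>g\<in>{0..k}. \<exists>hj\<in>{0..k - g}.
            Iw i j = (\<Union>t\<in>{0..hj}. Imap h (powpat x n k) (Jstart n (g + t)) (Jend n (g + t)))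
          \<and> (\<forall>t1\<in>{0..hj}. \<forall>t2\<in>{0..hj}. t1 \<noteq> t2 \<longrightarrow>
               Imap h (powpat x n k) (Jstart n (g + t1)) (Jend n (g + t1))
             \<inter> Imap h (powpat x n k) (Jstart n (g + t2)) (Jend n (g + t2)) = {})"
  proof
    fix j assume "j \<in> {1..l}"
    then have j1: "1 \<le> j" "j \<le> l" by auto
    obtain g where g: "g \<le> Suc k" "R g = S j" using Rbnd[of j] j1 by auto
    obtain g' where g': "g' \<le> Suc k" "R g' = S (Suc j)" using Rbnd[of "Suc j"] j1 by auto
    have pg: "p g = (\<Sum>t\<in>{1..<j}. (t+1) * i t)"
      using p_pre[OF g(1)] R[OF g(1)] g(2) Qeq[of j] j1 by simp
    have pg': "p g' = (\<Sum>t\<in>{1..<Suc j}. (t+1) * i t)"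
      using p_pre[OF g'(1)] R[OF g'(1)] g'(2) Qeq[of "Suc j"] j1 by simp
    have ij: "i j \<ge> 1" using assms(6) j1 by auto
    have "p g' = p g + (j+1) * i j" using pg pg' j1 by simp
    then have "p g < p g'" using ij by simp
    have gg: "g < g'"
    proof (rule ccontr)
      assume "\<not> g < g'"
      then have "p g' \<le> p g" using pmono by simp
      then show False using \<open>p g < p g'\<close> by simp
    qed
    define hj where "hj = g' - Suc g"
    have g'eq: "Suc (g + hj) = g'" using gg hj_def by simp
    have Iweq: "Iw i j = {p g + 1 .. p g'}"
      unfolding Iw_def pg pg' by (simp add: atLeastLessThanSuc_atLeastAtMost)
    have U: "(\<Union>t\<in>{0..hj}. Imap h (powpat x n k) (Jstart n (g + t)) (Jend n (g + t))) = {p g + 1 .. p g'}"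
      unfolding Imap_eq using union_ivl[of p g hj] pmono g'eq by simp
    have D: "Imap h (powpat x n k) (Jstart n (g + t1)) (Jend n (g + t1))
             \<inter> Imap h (powpat x n k) (Jstart n (g + t2)) (Jend n (g + t2)) = {}"
      if "t1 \<noteq> t2" for t1 t2
    proof (cases "t1 < t2")
      case True
      then have "p (Suc (g + t1)) \<le> p (g + t2)" using pmono by simp
      then show ?thesis unfolding Imap_eq by auto
    next
      case False
      then have "p (Suc (g + t2)) \<le> p (g + t1)" using pmono that by simp
      then show ?thesis unfolding Imap_eq by auto
    qed
    show "\<exists>g\<in>{0..k}. \<exists>hj\<in>{0..k - g}.
            Iw i j = (\<Union>t\<in>{0..hj}. Imap h (powpat x n k) (Jstart n (g + t)) (Jend n (g + t)))
          \<and> (\<forall>t1\<in>{0..hj}. \<forall>t2\<in>{0..hj}. t1 \<noteq> t2 \<longrightarrow>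
               Imap h (powpat x n k) (Jstart n (g + t1)) (Jend n (g + t1))
             \<inter> Imap h (powpat x n k) (Jstart n (g + t2)) (Jend n (g + t2)) = {})"
    proof (intro bexI conjI)
      show "Iw i j = (\<Union>t\<in>{0..hj}. Imap h (powpat x n k) (Jstart n (g + t)) (Jend n (g + t)))"
        using Iweq U by simp
      show "\<forall>t1\<in>{0..hj}. \<forall>t2\<in>{0..hj}. t1 \<noteq> t2 \<longrightarrow>
               Imap h (powpat x n k) (Jstart n (g + t1)) (Jend n (g + t1))
             \<inter> Imap h (powpat x n k) (Jstart n (g + t2)) (Jend n (g + t2)) = {}"
        using D by blast
      show "g \<in> {0..k}" using gg g'(1) by simp
      show "hj \<in> {0..k - g}" using g'eq g'(1) by simp
    qed
  qed
  show ?thesis using part1 part2 by blast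
qed
end
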